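(* Let $d(z)=\sum_{k\ge0}d_kz^{-k-1}$ be a formal Laurent series and $P(z)=\sum_{\alpha=0}^{m} c_{\alpha,1}z^\alpha$, $Q(z)=\sum_{\alpha=0}^{m} c_{\alpha,0}z^\alpha$ complex polynomials with $c_{m,1}\ne0$, $m\ge1$, $\deg Q<m$. Suppose that the initial data are $\varphi(x,y)=\operatorname{Res}\{d(\xi)(Q(\xi)/P(\xi))^y\xi^x\}$ for $(x,y)\in\mathbb Z_+^2$ with $x<m$ or $y=0$ (with $Q/P$ expanded at $\xi=\infty$). Define $\Phi_k(w)=\sum_{y\ge1}\varphi(k,y)w^{-y-1}$ for $0\le k\le m-1$ and $R_{k+1}(z,w)=z^{-k-1}\sum_{\alpha=k+1}^{m}(c_{\alpha,1}w-c_{\alpha,0})z^\alpha$. Then $$\sum_{k=0}^{m-1}R_{k+1}(z,w)\Phi_k(w)-\frac1w\sum_{\alpha=0}^{m-1}\sum_{x=0}^{\alpha-1}c_{\alpha,0}\,\varphi(x,0)\,z^{\alpha-x-1}=0,$$ so that the generating function of the solution of the Cauchy problem is $\mathcal D(z,w)=\dfrac{P(z)d(z)}{P(z)w-Q(z)}$.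
   Context: $\mathbb Z_+$ denotes the nonnegative integers; $\operatorname{Res}$ of a formal Laurent series in $\xi$ is its coefficient of $\xi^{-1}$. The Cauchy problem is: $\sum_{\alpha=0}^{m} c_{\alpha,1} r(x+\alpha,y+1)-\sum_{\alpha=0}^{m} c_{\alpha,0} r(x+\alpha,y)=0$ for all $x,y\ge0$, and $r(x,y)=\varphi(x,y)$ whenever $x<m$ or $y=0$; $\mathcal D(z,w)=\sum_{(x,y)\in\mathbb Z_+^2}r(x,y)z^{-x-1}w^{-y-1}$. *)

theory Defs
  imports "HOL-Computational_Algebra.Formal_Laurent_Series"
begin

text \<open>A formal Laurent series in a variable u expanded at u = infinity
(finitely many positive powers of u, possibly infinitely many negative ones) is
represented as an element of type complex fls in the variable t = 1/u.  Thus
u = fls_X_inv and u^(-1) = fls_X.  Series in two variables z and w, expanded at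
z = infinity and w = infinity, are represented in complex fls fls: the outer
variable is 1/w, the inner one is 1/z.\<close>

definition zvar :: "complex fls" where
  "zvar = fls_X_inv"

definition polz :: "(nat \<Rightarrow> complex) \<Rightarrow> nat \<Rightarrow> complex fls" where
  "polz c m = (\<Sum>\<alpha>\<le>m. fls_const (c \<alpha>) * zvar ^ \<alpha>)"

text \<open>d(xi) = sum_{k>=0} d_k xi^(-k-1).\<close>
definition dser :: "(nat \<Rightarrow> complex) \<Rightarrow> complex fls" where
  "dser d = fls_shift (-1) (fps_to_fls (Abs_fps d))"

text \<open>Res: coefficient of xi^(-1), i.e. of the first power of 1/xi.\<close>
definition Res :: "complex fls \<Rightarrow> complex" where
  "Res f = fls_nth f 1"

definition phi :: "(nat \<Rightarrow> complex) \<Rightarrow> (nat \<Rightarrow> complex) \<Rightarrow> nat \<Rightarrow> (nat \<Rightarrow> complex)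
                    \<Rightarrow> nat \<Rightarrow> nat \<Rightarrow> complex" where
  "phi c1 c0 m d x y = Res (dser d * (polz c0 m / polz c1 m) ^ y * zvar ^ x)"

definition Z :: "complex fls fls" where
  "Z = fls_const zvar"

definition W :: "complex fls fls" where
  "W = fls_X_inv"

definition cst :: "complex \<Rightarrow> complex fls fls" where
  "cst a = fls_const (fls_const a)"

text \<open>Phi_k(w) = sum_{y>=1} phi(k,y) w^(-y-1) (coefficients given by a function f k y).\<close>
definition Phi :: "(nat \<Rightarrow> nat \<Rightarrow> complex) \<Rightarrow> nat \<Rightarrow> complex fls fls" where
  "Phi f k = fps_to_fls (Abs_fps (\<lambda>n. if 2 \<le> n then fls_const (f k (n - 1)) else 0))"

definition Rk :: "(nat \<Rightarrow> complex) \<Rightarrow> (nat \<Rightarrow> complex) \<Rightarrow> nat \<Rightarrow> nat \<Rightarrow> complex fls fls" where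
  "Rk c1 c0 m k = (\<Sum>\<alpha>\<in>{k+1..m}. (cst (c1 \<alpha>) * W - cst (c0 \<alpha>)) * Z ^ (\<alpha> - k - 1))"

definition cauchy_sol :: "(nat \<Rightarrow> complex) \<Rightarrow> (nat \<Rightarrow> complex) \<Rightarrow> nat
                          \<Rightarrow> (nat \<Rightarrow> nat \<Rightarrow> complex) \<Rightarrow> (nat \<Rightarrow> nat \<Rightarrow> complex) \<Rightarrow> bool" where
  "cauchy_sol c1 c0 m phi0 r \<longleftrightarrow>
     (\<forall>x y. (\<Sum>\<alpha>\<le>m. c1 \<alpha> * r (x + \<alpha>) (y + 1)) - (\<Sum>\<alpha>\<le>m. c0 \<alpha> * r (x + \<alpha>) y) = 0) \<and>
     (\<forall>x y. (x < m \<or> y = 0) \<longrightarrow> r x y = phi0 x y)"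

text \<open>D(z,w) = sum_{x,y} r(x,y) z^(-x-1) w^(-y-1).\<close>
definition genD :: "(nat \<Rightarrow> nat \<Rightarrow> complex) \<Rightarrow> complex fls fls" where
  "genD r = fls_shift (-1) (fps_to_fls (Abs_fps (\<lambda>y.
              fls_shift (-1) (fps_to_fls (Abs_fps (\<lambda>x. r x y))))))"

end

theory Submission
  imports Defs
begin
unbundle fps_syntax


definition lowb :: "'a::zero fls \<Rightarrow> int \<Rightarrow> bool" where
  "lowb f k \<longleftrightarrow> (\<forall>i<k. f $$ i = 0)"

lemma lowb_mult:
  fixes f g :: "'a::{comm_monoid_add,mult_zero} fls"
  assumes "lowb f a" "lowb g b" shows "lowb (f*g) (a+b)"
proof (cases "f = 0 \<or> g = 0")
  case True thus ?thesis by (auto simp: lowb_def)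
next
  case False
  have "a \<le> fls_subdegree f" using False assms(1) by (intro fls_subdegree_geI) (auto simp: lowb_def)
  moreover have "b \<le> fls_subdegree g" using False assms(2) by (intro fls_subdegree_geI) (auto simp: lowb_def)
  ultimately show ?thesis unfolding lowb_def by (auto intro!: fls_times_nth_eq0)
qed

lemma lowb_mono: "lowb f a \<Longrightarrow> b \<le> a \<Longrightarrow> lowb f b" by (auto simp: lowb_def)
lemma lowb_add: "lowb f a \<Longrightarrow> lowb g a \<Longrightarrow> lowb (f+g) a" by (auto simp: lowb_def)
lemma lowb_diff: "lowb (f::'a::ab_group_add fls) a \<Longrightarrow> lowb g a \<Longrightarrow> lowb (f-g) a" by (auto simp: lowb_def)
lemma lowb_uminus: "lowb (f::'a::ab_group_add fls) a \<Longrightarrow> lowb (-f) a" by (auto simp: lowb_def)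
lemma lowb_sum: "(\<And>x. x\<in>A \<Longrightarrow> lowb (f x) a) \<Longrightarrow> lowb (\<Sum>x\<in>A. f x) a"
  by (auto simp: lowb_def fls_nth_sum)
lemma lowb_const: "lowb (fls_const (c::'a::{comm_monoid_add,mult_zero})) 0" by (auto simp: lowb_def)
lemma lowb_cmult: "lowb f a \<Longrightarrow> lowb (fls_const (c::'a::{comm_monoid_add,mult_zero}) * f) a" by (auto simp: lowb_def)
lemma lowb_pow: "lowb (f::'a::comm_semiring_1 fls) a \<Longrightarrow> lowb (f^n) (int n * a)"
proof (induction n)
  case 0 thus ?case by (auto simp: lowb_def)
next
  case (Suc n)
  have "lowb (f * f^n) (a + int n * a)" by (rule lowb_mult) (use Suc in auto)
  thus ?case by (simp add: algebra_simps)
qed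
lemma lowb_zpow: "lowb (zvar ^ n) (- int n)"
  by (auto simp: lowb_def zvar_def)

lemma polz_nth: "polz c m $$ i = (if - int m \<le> i \<and> i \<le> 0 then c (nat (-i)) else 0)"
proof -
  have "polz c m $$ i = (\<Sum>\<alpha>\<le>m. if \<alpha> = nat (-i) \<and> i \<le> 0 then c \<alpha> else 0)"
    unfolding polz_def zvar_def fls_nth_sum
    by (intro sum.cong) auto
  also have "\<dots> = (if - int m \<le> i \<and> i \<le> 0 then c (nat (-i)) else 0)"
    by (cases "i \<le> 0") (auto simp: sum.delta)
  finally show ?thesis .
qed

lemma dser_lowb: "lowb (dser d) 1"
  by (auto simp: lowb_def dser_def)

lemma U_lowb:
  assumes "m \<ge> 1" "c1 m \<noteq> 0" "c0 m = 0"
  shows "lowb (polz c0 m / polz c1 m) 1"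
proof (cases "polz c0 m = 0")
  case True thus ?thesis by (auto simp: lowb_def)
next
  case False
  have "polz c1 m $$ (- int m) \<noteq> 0" using assms by (simp add: polz_nth)
  hence P0: "polz c1 m \<noteq> 0" by auto
  have sP: "fls_subdegree (polz c1 m) = - int m"
    using assms by (intro fls_subdegree_eqI) (auto simp: polz_nth)
  have sQ: "fls_subdegree (polz c0 m) \<ge> 1 - int m"
    using assms False
    apply (intro fls_subdegree_geI)
     apply (auto simp: polz_nth)
    subgoal for k by (subgoal_tac "k = - int m") auto
    done
  have "fls_subdegree (polz c0 m / polz c1 m) \<ge> 1"
    using fls_divide_subdegree[OF False P0] sP sQ by simp
  thus ?thesis by (auto simp: lowb_def)
qed

lemma polz_nonzero: "c1 m \<noteq> 0 \<Longrightarrow> polz c1 m \<noteq> 0"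
proof -
  assume "c1 m \<noteq> 0"
  hence "polz c1 m $$ (- int m) \<noteq> 0" by (simp add: polz_nth)
  thus ?thesis by auto
qed

lemma Res_mult_zpow: "Res (f * zvar ^ x) = f $$ (1 + int x)"
  unfolding Res_def zvar_def fls_X_inv_power_times_conv_shift(2) fls_shift_nth by (simp add: add.commute)

lemma phi_alt: "phi c1 c0 m d x y = (dser d * (polz c0 m / polz c1 m)^y) $$ (1 + int x)"
  by (simp add: phi_def Res_mult_zpow)

lemma Res_lin: "(\<Sum>\<alpha>\<in>A. c \<alpha> * Res (F * zvar^(f \<alpha>))) = Res (F * (\<Sum>\<alpha>\<in>A. fls_const (c \<alpha>) * zvar^(f \<alpha>)))"
proof -
  have "F * (\<Sum>\<alpha>\<in>A. fls_const (c \<alpha>) * zvar^(f \<alpha>)) = (\<Sum>\<alpha>\<in>A. fls_const (c \<alpha>) * (F * zvar^(f \<alpha>)))"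
    by (simp add: sum_distrib_left algebra_simps)
  thus ?thesis by (simp add: Res_def fls_nth_sum)
qed

lemma phi_rec:
  assumes "c1 m \<noteq> 0"
  shows "(\<Sum>\<alpha>\<le>m. c1 \<alpha> * phi c1 c0 m d (x + \<alpha>) (y + 1)) - (\<Sum>\<alpha>\<le>m. c0 \<alpha> * phi c1 c0 m d (x + \<alpha>) y) = 0"
proof -
  define U where "U = polz c0 m / polz c1 m"
  have UP: "U * polz c1 m = polz c0 m" using polz_nonzero[of c1 m, OF assms] by (simp add: U_def)
  have e1: "phi c1 c0 m d (x + \<alpha>) (y + 1) = Res ((dser d * U^(y+1) * zvar^x) * zvar^\<alpha>)" for \<alpha>
    by (simp add: phi_def U_def power_add mult.assoc)
  have e0: "phi c1 c0 m d (x + \<alpha>) y = Res ((dser d * U^y * zvar^x) * zvar^\<alpha>)" for \<alpha>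
    by (simp add: phi_def U_def power_add mult.assoc)
  have "(\<Sum>\<alpha>\<le>m. c1 \<alpha> * phi c1 c0 m d (x + \<alpha>) (y + 1)) = Res ((dser d * U^(y+1) * zvar^x) * polz c1 m)"
    unfolding e1 Res_lin[where f="\<lambda>a. a"] polz_def ..
  also have "(dser d * U^(y+1) * zvar^x) * polz c1 m = (dser d * U^y * zvar^x) * polz c0 m"
    by (simp add: UP[symmetric] algebra_simps)
  also have "Res \<dots> = (\<Sum>\<alpha>\<le>m. c0 \<alpha> * phi c1 c0 m d (x + \<alpha>) y)"
    unfolding e0 Res_lin[where f="\<lambda>a. a"] polz_def ..
  finally show ?thesis by simp
qed

lemma uniq:
  assumes r: "cauchy_sol c1 c0 m p r" and s: "cauchy_sol c1 c0 m p s" and c: "c1 m \<noteq> 0"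
  shows "r x y = s x y"
proof (induction y arbitrary: x)
  case 0 thus ?case using r s by (simp add: cauchy_sol_def)
next
  case (Suc y)
  show ?case
  proof (induction x rule: less_induct)
    case (less x)
    show ?case
    proof (cases "x < m")
      case True thus ?thesis using r s by (simp add: cauchy_sol_def)
    next
      case False
      then obtain x' where x: "x = x' + m" by (metis add.commute le_add_diff_inverse not_less)
      have set: "{..m} = insert m {..<m}" by auto
      have rr: "(\<Sum>\<alpha>\<le>m. c1 \<alpha> * r (x' + \<alpha>) (y + 1)) = (\<Sum>\<alpha>\<le>m. c0 \<alpha> * r (x' + \<alpha>) y)"
        using r by (simp add: cauchy_sol_def)
      have ss: "(\<Sum>\<alpha>\<le>m. c1 \<alpha> * s (x' + \<alpha>) (y + 1)) = (\<Sum>\<alpha>\<le>m. c0 \<alpha> * s (x' + \<alpha>) y)"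
        using s by (simp add: cauchy_sol_def)
      have A: "(\<Sum>\<alpha><m. c1 \<alpha> * r (x' + \<alpha>) (y + 1)) = (\<Sum>\<alpha><m. c1 \<alpha> * s (x' + \<alpha>) (y + 1))"
        using less x by (intro sum.cong) auto
      have B: "(\<Sum>\<alpha>\<le>m. c0 \<alpha> * r (x' + \<alpha>) y) = (\<Sum>\<alpha>\<le>m. c0 \<alpha> * s (x' + \<alpha>) y)"
        using Suc.IH by (intro sum.cong) auto
      have spl: "(\<Sum>\<alpha>\<le>m. f \<alpha>) = f m + (\<Sum>\<alpha><m. f \<alpha>)" for f :: "nat \<Rightarrow> complex"
        unfolding set by simp
      have "c1 m * r x (y+1) = (\<Sum>\<alpha>\<le>m. c0 \<alpha> * r (x' + \<alpha>) y) - (\<Sum>\<alpha><m. c1 \<alpha> * r (x' + \<alpha>) (y + 1))"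
        using rr unfolding spl[of "\<lambda>\<alpha>. c1 \<alpha> * r (x' + \<alpha>) (y + 1)"] x by (simp add: eq_diff_eq)
      also have "\<dots> = (\<Sum>\<alpha>\<le>m. c0 \<alpha> * s (x' + \<alpha>) y) - (\<Sum>\<alpha><m. c1 \<alpha> * s (x' + \<alpha>) (y + 1))"
        using A B by simp
      also have "\<dots> = c1 m * s x (y+1)"
        using ss unfolding spl[of "\<lambda>\<alpha>. c1 \<alpha> * s (x' + \<alpha>) (y + 1)"] x by (metis add_diff_cancel_right')
      finally have "c1 m * r x (y+1) = c1 m * s x (y+1)" .
      thus ?thesis using c by simp
    qed
  qed
qed

lemma DU_lowb:
  assumes "m \<ge> 1" "c1 m \<noteq> 0" "c0 m = 0"
  shows "lowb (dser d * (polz c0 m / polz c1 m)^y) 1"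
proof -
  have "lowb ((polz c0 m / polz c1 m)^y) (int y * 1)" by (rule lowb_pow[OF U_lowb[of m c1 c0, OF assms]])
  hence "lowb ((polz c0 m / polz c1 m)^y) 0" by (rule lowb_mono) simp
  from lowb_mult[OF dser_lowb this] show ?thesis by simp
qed

lemma G_eq:
  assumes "m \<ge> 1" "c1 m \<noteq> 0" "c0 m = 0"
  shows "fls_shift (-1) (fps_to_fls (Abs_fps (\<lambda>x. phi c1 c0 m d x y))) = dser d * (polz c0 m / polz c1 m)^y"
proof (rule fls_eqI)
  fix i
  show "fls_shift (-1) (fps_to_fls (Abs_fps (\<lambda>x. phi c1 c0 m d x y))) $$ i = (dser d * (polz c0 m / polz c1 m)^y) $$ i"
  proof (cases "i < 1")
    case True thus ?thesis using DU_lowb[of m c1 c0 d y, OF assms] by (auto simp: lowb_def)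
  next
    case False thus ?thesis by (simp add: phi_alt)
  qed
qed

lemma genD_nth: "genD r $$ n = (if 1 \<le> n then fls_shift (-1) (fps_to_fls (Abs_fps (\<lambda>x. r x (nat n - 1)))) else 0)"
  by (simp add: genD_def nat_diff_distrib)

lemma genD_phi:
  assumes "m \<ge> 1" "c1 m \<noteq> 0" "c0 m = 0"
  shows "genD (phi c1 c0 m d) * (fls_const (polz c1 m) * W - fls_const (polz c0 m)) = fls_const (polz c1 m * dser d)"
proof -
  define U where "U = polz c0 m / polz c1 m"
  define g where "g = genD (phi c1 c0 m d)"
  have UP: "U * polz c1 m = polz c0 m" using polz_nonzero[of c1 m, OF assms(2)] by (simp add: U_def)
  have gn: "g $$ n = (if 1 \<le> n then dser d * U^(nat n - 1) else 0)" for n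
    unfolding g_def genD_nth G_eq[of m c1 c0, OF assms] U_def ..
  have e: "g * (fls_const (polz c1 m) * W - fls_const (polz c0 m)) = fls_const (polz c1 m) * fls_shift 1 g - fls_const (polz c0 m) * g"
    by (simp add: W_def fls_X_inv_times_conv_shift(1)[symmetric] algebra_simps)
  show ?thesis unfolding g_def[symmetric] e
  proof (rule fls_eqI)
    fix n
    show "(fls_const (polz c1 m) * fls_shift 1 g - fls_const (polz c0 m) * g) $$ n = fls_const (polz c1 m * dser d) $$ n"
    proof (cases "n < 0")
      case True thus ?thesis by (simp add: gn)
    next
      case False
      show ?thesis
      proof (cases "n = 0")
        case True thus ?thesis by (simp add: gn)
      next
        case F2: False
        have nn: "nat (n + 1) - Suc 0 = nat n" using False F2 by simp
        obtain k where k: "nat n = Suc k" using False F2 by (metis gr0_implies_Suc zero_less_nat_eq linorder_neqE_linordered_idom not_less)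
        have "polz c1 m * (dser d * U ^ Suc k) = polz c0 m * (dser d * U ^ k)"
          by (simp add: UP[symmetric] algebra_simps)
        thus ?thesis using False F2 by (simp add: gn nn k)
      qed
    qed
  qed
qed

definition Ap :: "(nat \<Rightarrow> complex) \<Rightarrow> nat \<Rightarrow> nat \<Rightarrow> complex fls" where
  "Ap c m k = (\<Sum>\<alpha>\<in>{k+1..m}. fls_const (c \<alpha>) * zvar^(\<alpha>-k-1))"

lemma fls_const_sum: "fls_const (\<Sum>x\<in>A. f x) = (\<Sum>x\<in>A. fls_const (f x))"
  by (rule fls_eqI) (simp add: fls_nth_sum)

lemma Rk_alt: "Rk c1 c0 m k = W * fls_const (Ap c1 m k) - fls_const (Ap c0 m k)"
proof -
  have "W * fls_const (Ap c1 m k) - fls_const (Ap c0 m k) =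
     (\<Sum>\<alpha>\<in>{k+1..m}. W * fls_const (fls_const (c1 \<alpha>) * zvar^(\<alpha>-k-1)) - fls_const (fls_const (c0 \<alpha>) * zvar^(\<alpha>-k-1)))"
    unfolding Ap_def fls_const_sum sum_distrib_left sum_subtractf ..
  also have "\<dots> = Rk c1 c0 m k"
    unfolding Rk_def
    by (intro sum.cong refl) (simp add: cst_def Z_def fls_const_power[symmetric] algebra_simps)
  finally show ?thesis by simp
qed

lemma Ap_nth: "Ap c m k $$ i = (if i \<le> 0 \<and> nat(-i)+k+1 \<le> m then c (nat(-i)+k+1) else 0)"
proof -
  have "Ap c m k $$ i = (\<Sum>\<alpha>\<in>{k+1..m}. if \<alpha> = nat(-i)+k+1 \<and> i \<le> 0 then c \<alpha> else 0)"
    unfolding Ap_def fls_nth_sum zvar_def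
    by (intro sum.cong refl) auto
  also have "\<dots> = (if i \<le> 0 \<and> nat(-i)+k+1 \<le> m then c (nat(-i)+k+1) else 0)"
    by (cases "i \<le> 0") (auto simp: sum.delta)
  finally show ?thesis .
qed

lemma reidx:
  fixes g :: "nat \<Rightarrow> 'a::comm_monoid_add"
  shows "(\<Sum>k<m. if j+k+1 \<le> m then g (j+k+1) else 0) = (\<Sum>\<alpha>\<in>{j+1..m}. g \<alpha>)"
proof -
  have "(\<Sum>k<m. if j+k+1 \<le> m then g (j+k+1) else 0) = sum (\<lambda>k. g (j+k+1)) {k\<in>{..<m}. j+k+1 \<le> m}"
    by (rule sum.inter_filter[symmetric]) simp
  also have "\<dots> = sum g ((\<lambda>k. j+k+1) ` {k\<in>{..<m}. j+k+1 \<le> m})"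
    by (subst sum.reindex) (auto simp: inj_on_def)
  also have "(\<lambda>k. j+k+1) ` {k\<in>{..<m}. j+k+1 \<le> m} = {j+1..m}"
  proof (intro equalityI subsetI)
    fix a assume "a \<in> {j+1..m}"
    hence "a = j + (a-j-1) + 1 \<and> (a-j-1) \<in> {k\<in>{..<m}. j+k+1 \<le> m}" by auto
    thus "a \<in> (\<lambda>k. j+k+1) ` {k\<in>{..<m}. j+k+1 \<le> m}" by blast
  qed auto
  finally show ?thesis .
qed

lemma E_lowb:
  assumes "m \<ge> 1" "c1 m \<noteq> 0" "c0 m = 0"
  shows "lowb (\<Sum>\<alpha>\<in>{j+1..m}. (fls_const (c1 \<alpha>) * (polz c0 m / polz c1 m) - fls_const (c0 \<alpha>)) * zvar^(\<alpha>-j-1)) 1"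
proof -
  define U where "U = polz c0 m / polz c1 m"
  have UP: "U * polz c1 m = polz c0 m" using polz_nonzero[of c1 m, OF assms(2)] by (simp add: U_def)
  have Ul: "lowb U 1" unfolding U_def by (rule U_lowb[of m c1 c0, OF assms])
  define h where "h \<alpha> = (fls_const (c1 \<alpha>) * U - fls_const (c0 \<alpha>)) * zvar^\<alpha>" for \<alpha>
  define E where "E = (\<Sum>\<alpha>\<in>{j+1..m}. (fls_const (c1 \<alpha>) * U - fls_const (c0 \<alpha>)) * zvar^(\<alpha>-j-1))"
  have "zvar^(j+1) * E = (\<Sum>\<alpha>\<in>{j+1..m}. h \<alpha>)"
    unfolding E_def sum_distrib_left h_def
  proof (intro sum.cong refl)
    fix \<alpha> assume "\<alpha> \<in> {j+1..m}"
    hence eqa: "(j+1) + (\<alpha>-j-1) = \<alpha>" by simp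
    have "zvar^\<alpha> = zvar^(j+1) * zvar^(\<alpha>-j-1)" by (metis eqa power_add)
    thus "zvar ^ (j + 1) * ((fls_const (c1 \<alpha>) * U - fls_const (c0 \<alpha>)) * zvar ^ (\<alpha> - j - 1)) =
         (fls_const (c1 \<alpha>) * U - fls_const (c0 \<alpha>)) * zvar ^ \<alpha>" by (simp add: algebra_simps)
  qed
  moreover have "(\<Sum>\<alpha>\<le>m. h \<alpha>) = 0"
  proof -
    have "(\<Sum>\<alpha>\<le>m. h \<alpha>) = U * polz c1 m - polz c0 m"
      unfolding h_def polz_def sum_distrib_left sum_subtractf[symmetric]
      by (intro sum.cong refl) (simp add: algebra_simps)
    thus ?thesis using UP by simp
  qed
  moreover have "(\<Sum>\<alpha>\<le>m. h \<alpha>) = (\<Sum>\<alpha>\<in>{\<alpha>. \<alpha> \<le> m \<and> \<alpha> \<le> j}. h \<alpha>) + (\<Sum>\<alpha>\<in>{j+1..m}. h \<alpha>)"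
  proof -
    have "{..m} = {\<alpha>. \<alpha> \<le> m \<and> \<alpha> \<le> j} \<union> {j+1..m}" by auto
    moreover have "{\<alpha>. \<alpha> \<le> m \<and> \<alpha> \<le> j} \<inter> {j+1..m} = {}" by auto
    ultimately show ?thesis by (metis finite_atLeastAtMost finite_atMost finite_subset sum.union_disjoint sup.cobounded1)
  qed
  ultimately have e: "zvar^(j+1) * E = - (\<Sum>\<alpha>\<in>{\<alpha>. \<alpha> \<le> m \<and> \<alpha> \<le> j}. h \<alpha>)"
    by (metis add.commute add_eq_0_iff)
  have "lowb (zvar^(j+1) * E) (- int j)"
    unfolding e
  proof (intro lowb_uminus lowb_sum)
    fix \<alpha> assume a: "\<alpha> \<in> {\<alpha>. \<alpha> \<le> m \<and> \<alpha> \<le> j}"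
    have h: "h \<alpha> = fls_const (c1 \<alpha>) * (U * zvar^\<alpha>) - fls_const (c0 \<alpha>) * zvar^\<alpha>"
      by (simp add: h_def algebra_simps)
    have l1: "lowb (U * zvar^\<alpha>) (1 + - int \<alpha>)" by (rule lowb_mult[OF Ul lowb_zpow])
    have l2: "lowb (zvar^\<alpha>) (- int \<alpha>)" by (rule lowb_zpow)
    show "lowb (h \<alpha>) (- int j)" unfolding h
      by (intro lowb_diff lowb_cmult lowb_mono[OF l1] lowb_mono[OF l2]) (use a in auto)
  qed
  hence "lowb E 1"
    unfolding lowb_def zvar_def fls_X_inv_power_times_conv_shift(1) fls_shift_nth
  proof (intro allI impI)
    fix i :: int assume H: "\<forall>i < - int j. E $$ (i + int (j + 1)) = 0" and "i < 1"
    hence "E $$ ((i - int (j+1)) + int (j + 1)) = 0" by (intro H[rule_format]) auto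
    thus "E $$ i = 0" by simp
  qed
  thus ?thesis unfolding E_def U_def .
qed

lemma core:
  assumes "m \<ge> 1" "c1 m \<noteq> 0" "c0 m = 0" "y \<ge> 1"
  shows "(\<Sum>k<m. Ap c1 m k * fls_const (phi c1 c0 m d k y) - Ap c0 m k * fls_const (phi c1 c0 m d k (y-1))) = 0"
proof (rule fls_eqI)
  fix i
  define U where "U = polz c0 m / polz c1 m"
  define F where "F = dser d * U^(y-1)"
  have yy: "y = Suc (y-1)" using assms(4) by simp
  have py: "phi c1 c0 m d k y = Res ((F*U) * zvar^k)" for k
    unfolding phi_def F_def U_def by (subst yy) (simp add: algebra_simps)
  have py1: "phi c1 c0 m d k (y-1) = Res (F * zvar^k)" for k
    unfolding phi_def F_def U_def by simp
  have py1': "phi c1 c0 m d k (y - Suc 0) = Res (F * zvar^k)" for k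
    using py1 by simp
  have nth: "(\<Sum>k<m. Ap c1 m k * fls_const (phi c1 c0 m d k y) - Ap c0 m k * fls_const (phi c1 c0 m d k (y-1))) $$ i
      = (\<Sum>k<m. Ap c1 m k $$ i * phi c1 c0 m d k y - Ap c0 m k $$ i * phi c1 c0 m d k (y-1))"
    by (simp add: fls_nth_sum)
  show "(\<Sum>k<m. Ap c1 m k * fls_const (phi c1 c0 m d k y) - Ap c0 m k * fls_const (phi c1 c0 m d k (y-1))) $$ i = 0 $$ i"
  proof (cases "i > 0")
    case True thus ?thesis unfolding nth by (simp add: Ap_nth)
  next
    case False
    define j where "j = nat (-i)"
    define g where "g \<alpha> = c1 \<alpha> * Res ((F*U) * zvar^(\<alpha>-j-1)) - c0 \<alpha> * Res (F * zvar^(\<alpha>-j-1))" for \<alpha>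
    define E where "E = (\<Sum>\<alpha>\<in>{j+1..m}. (fls_const (c1 \<alpha>) * U - fls_const (c0 \<alpha>)) * zvar^(\<alpha>-j-1))"
    have "(\<Sum>k<m. Ap c1 m k $$ i * phi c1 c0 m d k y - Ap c0 m k $$ i * phi c1 c0 m d k (y-1))
        = (\<Sum>k<m. if j+k+1 \<le> m then g (j+k+1) else 0)"
      by (intro sum.cong refl) (use False in \<open>simp add: Ap_nth py py1 py1' g_def j_def[symmetric] add.commute add.left_commute\<close>)
    also have "\<dots> = (\<Sum>\<alpha>\<in>{j+1..m}. g \<alpha>)" by (rule reidx)
    also have "\<dots> = Res ((F*U) * (\<Sum>\<alpha>\<in>{j+1..m}. fls_const (c1 \<alpha>) * zvar^(\<alpha>-j-1)))
                    - Res (F * (\<Sum>\<alpha>\<in>{j+1..m}. fls_const (c0 \<alpha>) * zvar^(\<alpha>-j-1)))"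
      unfolding g_def sum_subtractf Res_lin ..
    also have "\<dots> = Res (F * E)"
    proof -
      have "F * E = (F*U) * (\<Sum>\<alpha>\<in>{j+1..m}. fls_const (c1 \<alpha>) * zvar^(\<alpha>-j-1))
                    - F * (\<Sum>\<alpha>\<in>{j+1..m}. fls_const (c0 \<alpha>) * zvar^(\<alpha>-j-1))"
        unfolding E_def sum_distrib_left sum_subtractf[symmetric]
        by (intro sum.cong refl) (simp add: algebra_simps)
      thus ?thesis by (simp add: Res_def)
    qed
    also have "\<dots> = 0"
    proof -
      have lF: "lowb F 1" unfolding F_def U_def by (rule DU_lowb[of m c1 c0, OF assms(1-3)])
      have lE: "lowb E 1" unfolding E_def U_def by (rule E_lowb[of m c1 c0, OF assms(1-3)])
      from lowb_mult[OF lF lE] show ?thesis by (simp add: lowb_def Res_def)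
    qed
    finally show ?thesis unfolding nth by simp
  qed
qed

lemma S_eq:
  assumes "c0 m = 0"
  shows "(\<Sum>\<alpha><m. \<Sum>x<\<alpha>. cst (c0 \<alpha> * f x 0) * Z^(\<alpha>-x-1)) = fls_const (\<Sum>k<m. Ap c0 m k * fls_const (f k 0))"
proof -
  define T where "T \<alpha> x = fls_const (c0 \<alpha>) * zvar^(\<alpha>-x-1) * fls_const (f x 0)" for \<alpha> x
  have T: "cst (c0 \<alpha> * f x 0) * Z^(\<alpha>-x-1) = fls_const (T \<alpha> x)" for \<alpha> x
    by (simp add: T_def cst_def Z_def fls_const_power[symmetric] algebra_simps flip: fls_const_mult_const)
  have "(\<Sum>\<alpha><m. \<Sum>x<\<alpha>. cst (c0 \<alpha> * f x 0) * Z^(\<alpha>-x-1)) = fls_const (\<Sum>\<alpha><m. \<Sum>x<\<alpha>. T \<alpha> x)"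
    unfolding T fls_const_sum ..
  also have "(\<Sum>\<alpha><m. \<Sum>x<\<alpha>. T \<alpha> x) = (\<Sum>\<alpha>\<le>m. \<Sum>x<\<alpha>. T \<alpha> x)"
  proof -
    have "{..m} = insert m {..<m}" by auto
    moreover have "T m x = 0" for x using assms by (simp add: T_def)
    ultimately show ?thesis by simp
  qed
  also have "\<dots> = (\<Sum>x<m. \<Sum>\<alpha>\<in>{Suc x..m}. T \<alpha> x)" by (rule sum.nested_swap')
  also have "\<dots> = (\<Sum>k<m. Ap c0 m k * fls_const (f k 0))"
    unfolding Ap_def sum_distrib_right T_def by simp
  finally show ?thesis .
qed

lemma part1:
  assumes "m \<ge> 1" "c1 m \<noteq> 0" "c0 m = 0"
  shows "(\<Sum>k<m. Rk c1 c0 m k * Phi (phi c1 c0 m d) k)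
           - (1 / W) * (\<Sum>\<alpha><m. \<Sum>x<\<alpha>. cst (c0 \<alpha> * phi c1 c0 m d x 0) * Z ^ (\<alpha> - x - 1)) = 0"
proof -
  define f where "f = phi c1 c0 m d"
  define S' where "S' = (\<Sum>k<m. Ap c0 m k * fls_const (f k 0))"
  have W1: "1 / W = fls_X" by (simp add: W_def fls_inverse_X_inv divide_inverse)
  have Phin: "Phi f k $$ n = (if 2 \<le> n then fls_const (f k (nat n - 1)) else 0)" for k n
    apply (simp add: Phi_def) using le_nat_iff[of n 2] by auto
  have L: "(\<Sum>k<m. Rk c1 c0 m k * Phi f k)
           - (1 / W) * (\<Sum>\<alpha><m. \<Sum>x<\<alpha>. cst (c0 \<alpha> * f x 0) * Z ^ (\<alpha> - x - 1))
         = (\<Sum>k<m. fls_const (Ap c1 m k) * fls_shift 1 (Phi f k) - fls_const (Ap c0 m k) * Phi f k)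
           - fls_shift (-1) (fls_const S')"
    unfolding W1 S_eq[of c0 m f, OF assms(3)] S'_def[symmetric] fls_X_times_conv_shift(1)
    by (intro arg_cong2[where f=minus] refl sum.cong)
       (simp add: Rk_alt W_def fls_X_inv_times_conv_shift(1)[symmetric] algebra_simps)
  have "(\<Sum>k<m. fls_const (Ap c1 m k) * fls_shift 1 (Phi f k) - fls_const (Ap c0 m k) * Phi f k)
           - fls_shift (-1) (fls_const S') = 0"
  proof (rule fls_eqI)
    fix n
    have nth: "((\<Sum>k<m. fls_const (Ap c1 m k) * fls_shift 1 (Phi f k) - fls_const (Ap c0 m k) * Phi f k)
           - fls_shift (-1) (fls_const S')) $$ n
       = (\<Sum>k<m. Ap c1 m k * Phi f k $$ (n+1) - Ap c0 m k * Phi f k $$ n) - (if n = 1 then S' else 0)"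
      by (simp add: fls_nth_sum)
    show "((\<Sum>k<m. fls_const (Ap c1 m k) * fls_shift 1 (Phi f k) - fls_const (Ap c0 m k) * Phi f k)
           - fls_shift (-1) (fls_const S')) $$ n = 0 $$ n"
      unfolding nth
    proof (cases "n \<le> 0")
      case True thus "(\<Sum>k<m. Ap c1 m k * Phi f k $$ (n+1) - Ap c0 m k * Phi f k $$ n) - (if n = 1 then S' else 0) = 0 $$ n"
        by (simp add: Phin)
    next
      case False
      show "(\<Sum>k<m. Ap c1 m k * Phi f k $$ (n+1) - Ap c0 m k * Phi f k $$ n) - (if n = 1 then S' else 0) = 0 $$ n"
      proof (cases "n = 1")
        case True
        have "(\<Sum>k<m. Ap c1 m k * Phi f k $$ (n+1) - Ap c0 m k * Phi f k $$ n) - (if n = 1 then S' else 0)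
           = (\<Sum>k<m. Ap c1 m k * fls_const (f k 1) - Ap c0 m k * fls_const (f k (1-1)))"
          unfolding S'_def using True by (simp add: Phin sum_subtractf)
        also have "\<dots> = 0" unfolding f_def by (rule core[of m c1 c0 1 d, OF assms]) simp
        finally show ?thesis by simp
      next
        case F2: False
        have nn: "nat (n+1) - Suc 0 = nat n" using False by simp
        have "(\<Sum>k<m. Ap c1 m k * Phi f k $$ (n+1) - Ap c0 m k * Phi f k $$ n) - (if n = 1 then S' else 0)
           = (\<Sum>k<m. Ap c1 m k * fls_const (f k (nat n)) - Ap c0 m k * fls_const (f k (nat n - 1)))"
        proof -
          have n2: "2 \<le> n" using False F2 by simp
          show ?thesis using F2 n2 by (simp add: Phin nn)
        qed
        also have "\<dots> = 0" unfolding f_def by (rule core[of m c1 c0 "nat n" d, OF assms]) (use False in simp)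
        finally show ?thesis by simp
      qed
    qed
  qed
  thus ?thesis using L unfolding f_def by simp
qed


theorem mainTheorem4:
  fixes d c1 c0 :: "nat \<Rightarrow> complex" and m :: nat
  assumes "m \<ge> 1" and "c1 m \<noteq> 0" and "c0 m = 0"
  shows "(\<Sum>k<m. Rk c1 c0 m k * Phi (phi c1 c0 m d) k)
           - (1 / W) * (\<Sum>\<alpha><m. \<Sum>x<\<alpha>. cst (c0 \<alpha> * phi c1 c0 m d x 0) * Z ^ (\<alpha> - x - 1)) = 0
       \<and> (\<forall>r. cauchy_sol c1 c0 m (phi c1 c0 m d) r \<longrightarrow>
              genD r = fls_const (polz c1 m) * fls_const (dser d)
                       / (fls_const (polz c1 m) * W - fls_const (polz c0 m)))"
proof (intro conjI allI impI)
  show "(\<Sum>k<m. Rk c1 c0 m k * Phi (phi c1 c0 m d) k)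
           - (1 / W) * (\<Sum>\<alpha><m. \<Sum>x<\<alpha>. cst (c0 \<alpha> * phi c1 c0 m d x 0) * Z ^ (\<alpha> - x - 1)) = 0"
    by (rule part1[of m c1 c0 d, OF assms])
next
  fix r assume cs: "cauchy_sol c1 c0 m (phi c1 c0 m d) r"
  have ps: "cauchy_sol c1 c0 m (phi c1 c0 m d) (phi c1 c0 m d)"
    unfolding cauchy_sol_def using phi_rec[of c1 m c0 d] assms(2) by auto
  have req: "r = phi c1 c0 m d"
    by (intro ext uniq[OF cs ps assms(2)])
  define E where "E = fls_const (polz c1 m) * W - fls_const (polz c0 m)"
  have "E $$ (-1) = polz c1 m" by (simp add: E_def W_def)
  hence E0: "E \<noteq> 0" using polz_nonzero[of c1 m, OF assms(2)] by auto
  have "genD r * E = fls_const (polz c1 m * dser d)"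
    unfolding req E_def by (rule genD_phi[of m c1 c0 d, OF assms])
  hence "genD r = fls_const (polz c1 m * dser d) / E" using E0 by (simp add: eq_divide_eq)
  thus "genD r = fls_const (polz c1 m) * fls_const (dser d)
                       / (fls_const (polz c1 m) * W - fls_const (polz c0 m))"
    by (simp add: E_def)
qed

end
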